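(* Let $\mathcal{I}$ and $\mathcal{F}$ be the sets of initial and final states of the NFA $\mathcal{A}$, and $M=\mathcal{I}\times\mathcal{F}$. For $\mu=(I,F)\in M$ with $F=((d_1,d_2),e_1,e_2,\kappa)$, let $R_\mu$ be the set of words labelling a path in $\mathcal{A}$ from $I$ to $F$, and let $B_\mu=B(d_1,d_2,e_1,e_2)$. Then $\mathcal{H}_\kappa(L_1,L_2)=\bigcup_{\mu\in M}B_\mu^{R_\mu}$, and the sets $B_\mu^{R_\mu}$, $\mu\in M$, are pairwise disjoint. Moreover, for every $\mu\in M$, every $\beta\in B_\mu$ and every $v\in R_\mu$, the minimal gamma-alpha-prefix of $v\beta\bar v$ is $v$.
   Context: $\Sigma$ is a finite alphabet with at least two letters with an involution $a\mapsto\bar a$ ($\bar{\bar a}=a$), extended to words by $\overline{a_1\cdots a_m}=\bar a_m\cdots\bar a_1$ and to languages elementwise. $\kappa$ is a fixed positive integer. $\mathcal{H}_\kappa(L_1,L_2)=\{\gamma\alpha\beta\bar\alpha\bar\gamma:|\alpha|\ge\kappa,\ \gamma\alpha\beta\bar\alpha\in L_1\text{ or }\alpha\beta\bar\alpha\bar\gamma\in L_2\}$. $L_1,L_2\subseteq\Sigma^*$ are regular; $\mathcal{A}_1=(Q_1,\Sigma,E_1,\{q_{01}\},F_1)$ is a complete DFA accepting $L_1$, $\mathcal{A}_2=(Q_2,\Sigma,E_2,\{q_{02}\},F_2)$ a complete DFA accepting $\overline{L_2}$; $p\cdot w$ is the state reached from $p$ on $w$. For $\pi\in\mathcal{H}_\kappa(L_1,L_2)$,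 consider all factorizations $\pi=\gamma\alpha\beta\bar\alpha\bar\gamma$ with $|\alpha|=\kappa$ and ($\gamma\alpha\beta\bar\alpha\in L_1$ or $\alpha\beta\bar\alpha\bar\gamma\in L_2$); the minimal gamma-alpha-prefix of $\pi$ is the word $\gamma\alpha$ for such a factorization with $|\gamma|$ minimal. For languages $B,R$, $B^R=\{v\beta\bar v:\beta\in B,v\in R\}$. Construction of $\mathcal{A}$: $Q_{12}=\{(q_{01}\cdot w,q_{02}\cdot w):w\in\Sigma^*\}$ with $(p_1,p_2)\cdot w=(p_1\cdot w,p_2\cdot w)$. For $(p_1,p_2,q_1,q_2)\in Q_1\times Q_2\times Q_1\times Q_2$ let $B(p_1,p_2,q_1,q_2)=\{w\in\Sigma^*:p_1\cdot w=q_1,\ p_2\cdot\bar w=q_2\}$; the quadruple is a basic bridge if this set is nonempty. The states of $\mathcal{A}$ (called bridges) are all $((p_1,p_2),q_1,q_2,\ell)$ with $(p_1,p_2)\in Q_{12}$, $q_i\in Q_i$, $\ell\in\{0,\dots,\kappa\}$ such that $(p_1,p_2,q_1,q_2)$ is a basic bridge. For $a\in\Sigma$, $P\in Q_{12}$, $q_1\in Q_1,q_2\in Q_2$, there is an $a$-labelled arc from $(P,q_1\cdot\bar a,q_2\cdot\bar a,\ell)$ to $(P\cdot a,q_1,q_2,\ell')$, provided both are states, exactly in the cases: $\ell=\ell'=0$ and $q_1\cdot\bar a\notin F_1$, $q_2\cdot\bar a\notin F_2$; or $\ell=0,\ell'=1$ and ($q_1\cdot\bar a\in F_1$ or $q_2\cdot\bar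 a\in F_2$); or $1\le\ell<\kappa$ and $\ell'=\ell+1$. Initial states are those of the form $((q_{01},q_{02}),q_1',q_2',0)$; final states are those with $\ell=\kappa$. *)

theory Defs
  imports Main "HOL-Library.Disjoint_Sets"
begin

definition wbar :: "('a \<Rightarrow> 'a) \<Rightarrow> 'a list \<Rightarrow> 'a list" where
  "wbar bar w = rev (map bar w)"

section \<open>Complete DFAs: (transition function, initial state, final states); state set = UNIV\<close>

type_synonym ('q, 'a) dfa = "('q \<Rightarrow> 'a \<Rightarrow> 'q) \<times> 'q \<times> 'q set"

definition run :: "('q \<Rightarrow> 'a \<Rightarrow> 'q) \<Rightarrow> 'q \<Rightarrow> 'a list \<Rightarrow> 'q" where
  "run d p w = foldl d p w"

definition lang :: "('q, 'a) dfa \<Rightarrow> 'a list set" where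
  "lang A = (case A of (d, q0, F) \<Rightarrow> {w. run d q0 w \<in> F})"

definition Hk :: "('a \<Rightarrow> 'a) \<Rightarrow> nat \<Rightarrow> 'a list set \<Rightarrow> 'a list set \<Rightarrow> 'a list set" where
  "Hk bar \<kappa> L1 L2 = {\<gamma> @ \<alpha> @ \<beta> @ wbar bar \<alpha> @ wbar bar \<gamma> | \<gamma> \<alpha> \<beta>.
      length \<alpha> \<ge> \<kappa> \<and> (\<gamma> @ \<alpha> @ \<beta> @ wbar bar \<alpha> \<in> L1 \<or> \<alpha> @ \<beta> @ wbar bar \<alpha> @ wbar bar \<gamma> \<in> L2)}"

definition valid_fact :: "('a \<Rightarrow> 'a) \<Rightarrow> nat \<Rightarrow> 'a list set \<Rightarrow> 'a list set \<Rightarrow> 'a list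
    \<Rightarrow> 'a list \<Rightarrow> 'a list \<Rightarrow> 'a list \<Rightarrow> bool" where
  "valid_fact bar \<kappa> L1 L2 \<pi> \<gamma> \<alpha> \<beta> \<longleftrightarrow>
     \<pi> = \<gamma> @ \<alpha> @ \<beta> @ wbar bar \<alpha> @ wbar bar \<gamma> \<and> length \<alpha> = \<kappa> \<and>
     (\<gamma> @ \<alpha> @ \<beta> @ wbar bar \<alpha> \<in> L1 \<or> \<alpha> @ \<beta> @ wbar bar \<alpha> @ wbar bar \<gamma> \<in> L2)"

definition min_gap :: "('a \<Rightarrow> 'a) \<Rightarrow> nat \<Rightarrow> 'a list set \<Rightarrow> 'a list set \<Rightarrow> 'a list \<Rightarrow> 'a list" where
  "min_gap bar \<kappa> L1 L2 \<pi> = (SOME u. \<exists>\<gamma> \<alpha> \<beta>. valid_fact bar \<kappa> L1 L2 \<pi> \<gamma> \<alpha> \<beta> \<and> u = \<gamma> @ \<alpha> \<and>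
      (\<forall>\<gamma>' \<alpha>' \<beta>'. valid_fact bar \<kappa> L1 L2 \<pi> \<gamma>' \<alpha>' \<beta>' \<longrightarrow> length \<gamma> \<le> length \<gamma>'))"

section \<open>The construction of the NFA A (bridges)\<close>

definition Q12 :: "('q1, 'a) dfa \<Rightarrow> ('q2, 'a) dfa \<Rightarrow> ('q1 \<times> 'q2) set" where
  "Q12 A1 A2 = {(run (fst A1) (fst (snd A1)) w, run (fst A2) (fst (snd A2)) w) | w. True}"

definition Bset :: "('a \<Rightarrow> 'a) \<Rightarrow> ('q1, 'a) dfa \<Rightarrow> ('q2, 'a) dfa \<Rightarrow> 'q1 \<Rightarrow> 'q2 \<Rightarrow> 'q1 \<Rightarrow> 'q2
    \<Rightarrow> 'a list set" where
  "Bset bar A1 A2 p1 p2 q1 q2 =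
     {w. run (fst A1) p1 w = q1 \<and> run (fst A2) p2 (wbar bar w) = q2}"

type_synonym ('q1, 'q2) bridge = "('q1 \<times> 'q2) \<times> 'q1 \<times> 'q2 \<times> nat"

definition is_bridge :: "('a \<Rightarrow> 'a) \<Rightarrow> nat \<Rightarrow> ('q1, 'a) dfa \<Rightarrow> ('q2, 'a) dfa
    \<Rightarrow> ('q1, 'q2) bridge \<Rightarrow> bool" where
  "is_bridge bar \<kappa> A1 A2 s = (case s of ((p1, p2), q1, q2, l) \<Rightarrow>
      (p1, p2) \<in> Q12 A1 A2 \<and> Bset bar A1 A2 p1 p2 q1 q2 \<noteq> {} \<and> l \<le> \<kappa>)"

definition arc :: "('a \<Rightarrow> 'a) \<Rightarrow> nat \<Rightarrow> ('q1, 'a) dfa \<Rightarrow> ('q2, 'a) dfa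
    \<Rightarrow> ('q1, 'q2) bridge \<Rightarrow> 'a \<Rightarrow> ('q1, 'q2) bridge \<Rightarrow> bool" where
  "arc bar \<kappa> A1 A2 s a t \<longleftrightarrow>
     is_bridge bar \<kappa> A1 A2 s \<and> is_bridge bar \<kappa> A1 A2 t \<and>
     (\<exists>p1 p2 q1 q2 l l'.
        s = ((p1, p2), fst A1 q1 (bar a), fst A2 q2 (bar a), l) \<and>
        t = ((fst A1 p1 a, fst A2 p2 a), q1, q2, l') \<and>
        ((l = 0 \<and> l' = 0 \<and> fst A1 q1 (bar a) \<notin> snd (snd A1) \<and> fst A2 q2 (bar a) \<notin> snd (snd A2)) \<or>
         (l = 0 \<and> l' = 1 \<and> (fst A1 q1 (bar a) \<in> snd (snd A1) \<or> fst A2 q2 (bar a) \<in> snd (snd A2))) \<or>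
         (1 \<le> l \<and> l < \<kappa> \<and> l' = l + 1)))"

fun apath :: "('a \<Rightarrow> 'a) \<Rightarrow> nat \<Rightarrow> ('q1, 'a) dfa \<Rightarrow> ('q2, 'a) dfa
    \<Rightarrow> ('q1, 'q2) bridge \<Rightarrow> 'a list \<Rightarrow> ('q1, 'q2) bridge \<Rightarrow> bool" where
  "apath bar \<kappa> A1 A2 s [] t \<longleftrightarrow> s = t"
| "apath bar \<kappa> A1 A2 s (a # w) t \<longleftrightarrow> (\<exists>s'. arc bar \<kappa> A1 A2 s a s' \<and> apath bar \<kappa> A1 A2 s' w t)"

definition init_states :: "('a \<Rightarrow> 'a) \<Rightarrow> nat \<Rightarrow> ('q1, 'a) dfa \<Rightarrow> ('q2, 'a) dfa
    \<Rightarrow> ('q1, 'q2) bridge set" where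
  "init_states bar \<kappa> A1 A2 = {s. is_bridge bar \<kappa> A1 A2 s \<and>
      (\<exists>q1 q2. s = ((fst (snd A1), fst (snd A2)), q1, q2, 0))}"

definition final_states :: "('a \<Rightarrow> 'a) \<Rightarrow> nat \<Rightarrow> ('q1, 'a) dfa \<Rightarrow> ('q2, 'a) dfa
    \<Rightarrow> ('q1, 'q2) bridge set" where
  "final_states bar \<kappa> A1 A2 = {s. is_bridge bar \<kappa> A1 A2 s \<and> snd (snd (snd s)) = \<kappa>}"

definition Rmu :: "('a \<Rightarrow> 'a) \<Rightarrow> nat \<Rightarrow> ('q1, 'a) dfa \<Rightarrow> ('q2, 'a) dfa
    \<Rightarrow> ('q1, 'q2) bridge \<times> ('q1, 'q2) bridge \<Rightarrow> 'a list set" where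
  "Rmu bar \<kappa> A1 A2 \<mu> = {w. apath bar \<kappa> A1 A2 (fst \<mu>) w (snd \<mu>)}"

definition Bmu :: "('a \<Rightarrow> 'a) \<Rightarrow> ('q1, 'a) dfa \<Rightarrow> ('q2, 'a) dfa
    \<Rightarrow> ('q1, 'q2) bridge \<times> ('q1, 'q2) bridge \<Rightarrow> 'a list set" where
  "Bmu bar A1 A2 \<mu> = (case snd \<mu> of ((d1, d2), e1, e2, _) \<Rightarrow> Bset bar A1 A2 d1 d2 e1 e2)"

definition Bpow :: "('a \<Rightarrow> 'a) \<Rightarrow> 'a list set \<Rightarrow> 'a list set \<Rightarrow> 'a list set" where
  "Bpow bar B R = {v @ \<beta> @ wbar bar v | \<beta> v. \<beta> \<in> B \<and> v \<in> R}"

end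

theory Submission
  imports Defs
begin

lemma run_Nil[simp]: "run d p [] = p" by (simp add: run_def)
lemma run_Cons[simp]: "run d p (a#w) = run d (d p a) w" by (simp add: run_def)
lemma run_append[simp]: "run d p (u@w) = run d (run d p u) w" by (simp add: run_def)
lemma wbar_Nil[simp]: "wbar bar [] = []" by (simp add: wbar_def)
lemma wbar_Cons[simp]: "wbar bar (a#w) = wbar bar w @ [bar a]" by (simp add: wbar_def)
lemma wbar_append[simp]: "wbar bar (u@w) = wbar bar w @ wbar bar u" by (simp add: wbar_def)
lemma length_wbar[simp]: "length (wbar bar w) = length w" by (simp add: wbar_def)
lemma wbar_wbar: "(\<And>a. bar (bar a) = a) \<Longrightarrow> wbar bar (wbar bar w) = w"
  by (induction w) auto

lemma lang_eq: "lang A = {w. run (fst A) (fst (snd A)) w \<in> snd (snd A)}"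
  by (cases A) (auto simp: lang_def)

lemma Q12_run: "(p1,p2) \<in> Q12 A1 A2 \<Longrightarrow> (run (fst A1) p1 w, run (fst A2) p2 w) \<in> Q12 A1 A2"
  unfolding Q12_def by (auto, metis run_append)

lemma Q12_step: "(p1,p2) \<in> Q12 A1 A2 \<Longrightarrow> (fst A1 p1 a, fst A2 p2 a) \<in> Q12 A1 A2"
  using Q12_run[of p1 p2 A1 A2 "[a]"] by simp

lemma Q12_init: "(fst (snd A1), fst (snd A2)) \<in> Q12 A1 A2"
  unfolding Q12_def by (auto intro!: exI[of _ "[]"])

lemma Bset_back:
  assumes "x \<in> Bset bar A1 A2 (run (fst A1) p1 w) (run (fst A2) p2 w) e1 e2"
    and "\<And>a. bar (bar a) = a"
  shows "w @ x @ wbar bar w \<in> Bset bar A1 A2 p1 p2 (run (fst A1) e1 (wbar bar w)) (run (fst A2) e2 (wbar bar w))"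
  using assms by (simp add: Bset_def wbar_wbar)

lemma apath_comps:
  "apath bar \<kappa> A1 A2 s w t \<Longrightarrow> s = ((p1,p2),q1,q2,l) \<Longrightarrow> t = ((r1,r2),e1,e2,lt) \<Longrightarrow>
   r1 = run (fst A1) p1 w \<and> r2 = run (fst A2) p2 w \<and> q1 = run (fst A1) e1 (wbar bar w) \<and>
   q2 = run (fst A2) e2 (wbar bar w)"
proof (induction w arbitrary: s p1 p2 q1 q2 l)
  case Nil then show ?case by simp
next
  case (Cons a w)
  from Cons.prems obtain s' where ar: "arc bar \<kappa> A1 A2 s a s'" and ap: "apath bar \<kappa> A1 A2 s' w t" by auto
  from ar obtain p1' p2' q1' q2' l0 l' where
    s: "s = ((p1', p2'), fst A1 q1' (bar a), fst A2 q2' (bar a), l0)" and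
    s': "s' = ((fst A1 p1' a, fst A2 p2' a), q1', q2', l')" unfolding arc_def by blast
  have "fst A1 p1' a = fst A1 p1 a" "fst A2 p2' a = fst A2 p2 a" "q1 = fst A1 q1' (bar a)" "q2 = fst A2 q2' (bar a)"
    using s Cons.prems by auto
  with Cons.IH[OF ap s' Cons.prems(3)] show ?case by simp
qed

lemma apath_pos:
  "apath bar \<kappa> A1 A2 s w t \<Longrightarrow> 1 \<le> snd (snd (snd s)) \<Longrightarrow>
   snd (snd (snd t)) = snd (snd (snd s)) + length w"
proof (induction w arbitrary: s)
  case Nil then show ?case by simp
next
  case (Cons a w)
  from Cons.prems obtain s' where ar: "arc bar \<kappa> A1 A2 s a s'" and ap: "apath bar \<kappa> A1 A2 s' w t" by auto
  have "snd (snd (snd s')) = snd (snd (snd s)) + 1"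
    using ar Cons.prems(2) unfolding arc_def by auto
  with Cons.IH[OF ap] show ?case by simp
qed

lemma apath_bridge: "apath bar \<kappa> A1 A2 s w t \<Longrightarrow> w \<noteq> [] \<Longrightarrow> is_bridge bar \<kappa> A1 A2 s"
  by (cases w) (auto simp: arc_def)

definition cnd where
  "cnd bar A1 A2 e1 e2 w j \<longleftrightarrow> run (fst A1) e1 (wbar bar (drop j w)) \<in> snd (snd A1) \<or>
      run (fst A2) e2 (wbar bar (drop j w)) \<in> snd (snd A2)"

lemma apath_zero:
  "apath bar \<kappa> A1 A2 s w t \<Longrightarrow> s = ((p1,p2),q1,q2,0) \<Longrightarrow> t = ((r1,r2),e1,e2,\<kappa>) \<Longrightarrow> 0 < \<kappa> \<Longrightarrow>
   \<kappa> \<le> length w \<and> (\<forall>j \<le> length w - \<kappa>. cnd bar A1 A2 e1 e2 w j \<longleftrightarrow> j = length w - \<kappa>)"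
proof (induction w arbitrary: s p1 p2 q1 q2)
  case Nil then show ?case by simp
next
  case (Cons a w)
  from Cons.prems obtain s' where ar: "arc bar \<kappa> A1 A2 s a s'" and ap: "apath bar \<kappa> A1 A2 s' w t" by auto
  from ar obtain p1' p2' q1' q2' l0 l' where
    s: "s = ((p1', p2'), fst A1 q1' (bar a), fst A2 q2' (bar a), l0)" and
    s': "s' = ((fst A1 p1' a, fst A2 p2' a), q1', q2', l')" and
    c: "((l0 = 0 \<and> l' = 0 \<and> fst A1 q1' (bar a) \<notin> snd (snd A1) \<and> fst A2 q2' (bar a) \<notin> snd (snd A2)) \<or>
         (l0 = 0 \<and> l' = 1 \<and> (fst A1 q1' (bar a) \<in> snd (snd A1) \<or> fst A2 q2' (bar a) \<in> snd (snd A2))) \<or>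
         (1 \<le> l0 \<and> l0 < \<kappa> \<and> l' = l0 + 1))" unfolding arc_def by blast
  have l0: "l0 = 0" using s Cons.prems by simp
  note cm = apath_comps[OF ap s' Cons.prems(3)]
  have c0: "cnd bar A1 A2 e1 e2 (a#w) 0 \<longleftrightarrow> (fst A1 q1' (bar a) \<in> snd (snd A1) \<or> fst A2 q2' (bar a) \<in> snd (snd A2))"
    using cm by (simp add: cnd_def)
  have cS: "\<And>j. cnd bar A1 A2 e1 e2 (a#w) (Suc j) = cnd bar A1 A2 e1 e2 w j"
    by (simp add: cnd_def)
  show ?case
  proof (cases "l' = 1")
    case True
    have "\<kappa> = 1 + length w" using apath_pos[OF ap] s' True Cons.prems(3) by simp
    then show ?thesis using c0 c l0 True by auto
  next
    case False
    then have l': "l' = 0" and nc: "\<not> cnd bar A1 A2 e1 e2 (a#w) 0" using c l0 c0 by auto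
    have IH: "\<kappa> \<le> length w \<and> (\<forall>j \<le> length w - \<kappa>. cnd bar A1 A2 e1 e2 w j \<longleftrightarrow> j = length w - \<kappa>)"
      using Cons.IH[OF ap _ Cons.prems(3,4)] s' l' by simp
    show ?thesis
    proof (intro conjI allI impI)
      show "\<kappa> \<le> length (a#w)" using IH by simp
      fix j assume j: "j \<le> length (a#w) - \<kappa>"
      show "cnd bar A1 A2 e1 e2 (a#w) j \<longleftrightarrow> j = length (a#w) - \<kappa>"
      proof (cases j)
        case 0 then show ?thesis using nc IH by auto
      next
        case (Suc j') then show ?thesis using IH j cS by auto
      qed
    qed
  qed
qed

lemma mkpath_pos:
  assumes inv: "\<And>a. bar (bar a) = a"
  shows "1 \<le> l \<Longrightarrow> l + length w \<le> \<kappa> \<Longrightarrow> (p1,p2) \<in> Q12 A1 A2 \<Longrightarrow>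
   x \<in> Bset bar A1 A2 (run (fst A1) p1 w) (run (fst A2) p2 w) e1 e2 \<Longrightarrow>
   apath bar \<kappa> A1 A2 ((p1,p2), run (fst A1) e1 (wbar bar w), run (fst A2) e2 (wbar bar w), l) w
     ((run (fst A1) p1 w, run (fst A2) p2 w), e1, e2, l + length w)"
proof (induction w arbitrary: p1 p2 l)
  case Nil then show ?case by simp
next
  case (Cons a w)
  let ?s' = "((fst A1 p1 a, fst A2 p2 a), run (fst A1) e1 (wbar bar w), run (fst A2) e2 (wbar bar w), l+1)"
  have Q: "(fst A1 p1 a, fst A2 p2 a) \<in> Q12 A1 A2" using Q12_step[OF Cons.prems(3)] .
  have IH: "apath bar \<kappa> A1 A2 ?s' w ((run (fst A1) p1 (a#w), run (fst A2) p2 (a#w)), e1, e2, l + length (a#w))"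
    using Cons.IH[of "l+1" "fst A1 p1 a" "fst A2 p2 a"] Cons.prems Q by simp
  have b1: "is_bridge bar \<kappa> A1 A2 ((p1,p2), run (fst A1) e1 (wbar bar (a#w)), run (fst A2) e2 (wbar bar (a#w)), l)"
    unfolding is_bridge_def using Cons.prems Bset_back[OF Cons.prems(4) inv] by auto
  have b2: "is_bridge bar \<kappa> A1 A2 ?s'"
    unfolding is_bridge_def using Cons.prems Q Bset_back[of x bar A1 A2 "fst A1 p1 a" w "fst A2 p2 a" e1 e2] inv by auto
  have "arc bar \<kappa> A1 A2 ((p1,p2), run (fst A1) e1 (wbar bar (a#w)), run (fst A2) e2 (wbar bar (a#w)), l) a ?s'"
    unfolding arc_def using b1 b2 Cons.prems(1,2)
    apply (intro conjI b1 b2) apply (rule exI[of _ p1], rule exI[of _ p2], rule exI[of _ "run (fst A1) e1 (wbar bar w)"],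
       rule exI[of _ "run (fst A2) e2 (wbar bar w)"], rule exI[of _ l], rule exI[of _ "l+1"]) using Cons.prems(1,2) by simp
  then show ?case using IH apply (subst apath.simps(2)) apply (rule exI[of _ ?s']) by simp
qed

lemma mkpath_zero:
  assumes inv: "\<And>a. bar (bar a) = a" and k: "0 < \<kappa>"
  shows "\<kappa> \<le> length w \<Longrightarrow> (\<forall>j \<le> length w - \<kappa>. cnd bar A1 A2 e1 e2 w j \<longleftrightarrow> j = length w - \<kappa>) \<Longrightarrow>
   (p1,p2) \<in> Q12 A1 A2 \<Longrightarrow>
   x \<in> Bset bar A1 A2 (run (fst A1) p1 w) (run (fst A2) p2 w) e1 e2 \<Longrightarrow>
   apath bar \<kappa> A1 A2 ((p1,p2), run (fst A1) e1 (wbar bar w), run (fst A2) e2 (wbar bar w), 0) w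
     ((run (fst A1) p1 w, run (fst A2) p2 w), e1, e2, \<kappa>)"
proof (induction w arbitrary: p1 p2)
  case Nil then show ?case using k by simp
next
  case (Cons a w)
  have Q: "(fst A1 p1 a, fst A2 p2 a) \<in> Q12 A1 A2" using Q12_step[OF Cons.prems(3)] .
  have cS: "\<And>j. cnd bar A1 A2 e1 e2 (a#w) (Suc j) = cnd bar A1 A2 e1 e2 w j"
    by (simp add: cnd_def)
  have c0: "cnd bar A1 A2 e1 e2 (a#w) 0 \<longleftrightarrow> (fst A1 (run (fst A1) e1 (wbar bar w)) (bar a) \<in> snd (snd A1) \<or>
     fst A2 (run (fst A2) e2 (wbar bar w)) (bar a) \<in> snd (snd A2))"
    by (simp add: cnd_def)
  have b1: "is_bridge bar \<kappa> A1 A2 ((p1,p2), run (fst A1) e1 (wbar bar (a#w)), run (fst A2) e2 (wbar bar (a#w)), 0)"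
    unfolding is_bridge_def using Cons.prems Bset_back[OF Cons.prems(4) inv] by auto
  have B': "x \<in> Bset bar A1 A2 (run (fst A1) (fst A1 p1 a) w) (run (fst A2) (fst A2 p2 a) w) e1 e2"
    using Cons.prems(4) by simp
  show ?case
  proof (cases "length w + 1 = \<kappa>")
    case True
    let ?s' = "((fst A1 p1 a, fst A2 p2 a), run (fst A1) e1 (wbar bar w), run (fst A2) e2 (wbar bar w), 1)"
    have cc: "cnd bar A1 A2 e1 e2 (a#w) 0" using Cons.prems(2) True by auto
    have P: "apath bar \<kappa> A1 A2 ?s' w ((run (fst A1) p1 (a#w), run (fst A2) p2 (a#w)), e1, e2, \<kappa>)"
      using mkpath_pos[OF inv, of 1 w \<kappa> "fst A1 p1 a" "fst A2 p2 a" A1 A2 x e1 e2] True Q B' by simp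
    have b2: "is_bridge bar \<kappa> A1 A2 ?s'"
      unfolding is_bridge_def using Q Bset_back[OF B' inv] k by auto
    have "arc bar \<kappa> A1 A2 ((p1,p2), run (fst A1) e1 (wbar bar (a#w)), run (fst A2) e2 (wbar bar (a#w)), 0) a ?s'"
      unfolding arc_def using b1 b2 cc c0
      apply (intro conjI b1 b2) apply (rule exI[of _ p1], rule exI[of _ p2], rule exI[of _ "run (fst A1) e1 (wbar bar w)"],
         rule exI[of _ "run (fst A2) e2 (wbar bar w)"], rule exI[of _ 0], rule exI[of _ 1]) using cc c0 by simp
    then show ?thesis using P apply (subst apath.simps(2)) apply (rule exI[of _ ?s']) by simp
  next
    case False
    let ?s' = "((fst A1 p1 a, fst A2 p2 a), run (fst A1) e1 (wbar bar w), run (fst A2) e2 (wbar bar w), 0)"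
    have kw: "\<kappa> \<le> length w" using False Cons.prems(1) by simp
    have nc: "\<not> cnd bar A1 A2 e1 e2 (a#w) 0" using Cons.prems(2) kw by auto
    have hyp: "\<forall>j \<le> length w - \<kappa>. cnd bar A1 A2 e1 e2 w j \<longleftrightarrow> j = length w - \<kappa>"
    proof (intro allI impI)
      fix j assume "j \<le> length w - \<kappa>"
      then show "cnd bar A1 A2 e1 e2 w j \<longleftrightarrow> j = length w - \<kappa>"
        using Cons.prems(2)[rule_format, of "Suc j"] cS kw by auto
    qed
    have P: "apath bar \<kappa> A1 A2 ?s' w ((run (fst A1) p1 (a#w), run (fst A2) p2 (a#w)), e1, e2, \<kappa>)"
      using Cons.IH[OF kw hyp Q B'] by simp
    have b2: "is_bridge bar \<kappa> A1 A2 ?s'"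
      unfolding is_bridge_def using Q Bset_back[OF B' inv] k by auto
    have "arc bar \<kappa> A1 A2 ((p1,p2), run (fst A1) e1 (wbar bar (a#w)), run (fst A2) e2 (wbar bar (a#w)), 0) a ?s'"
      unfolding arc_def using b1 b2 nc c0
      apply (intro conjI b1 b2) apply (rule exI[of _ p1], rule exI[of _ p2], rule exI[of _ "run (fst A1) e1 (wbar bar w)"],
         rule exI[of _ "run (fst A2) e2 (wbar bar w)"], rule exI[of _ 0], rule exI[of _ 0]) using nc c0 by simp
    then show ?thesis using P apply (subst apath.simps(2)) apply (rule exI[of _ ?s']) by simp
  qed
qed

lemma vf_iff:
  assumes pi: "\<pi> = v @ \<beta> @ wbar bar v" and j: "j + \<kappa> \<le> length v"
  shows "(\<exists>\<alpha> \<beta>'. valid_fact bar \<kappa> L1 L2 \<pi> (take j v) \<alpha> \<beta>') \<longleftrightarrow>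
    (v @ \<beta> @ wbar bar (drop j v) \<in> L1 \<or> drop j v @ \<beta> @ wbar bar v \<in> L2)"
proof
  assume "\<exists>\<alpha> \<beta>'. valid_fact bar \<kappa> L1 L2 \<pi> (take j v) \<alpha> \<beta>'"
  then obtain \<alpha> \<beta>' where vf: "valid_fact bar \<kappa> L1 L2 \<pi> (take j v) \<alpha> \<beta>'" by blast
  have e: "\<pi> = take j v @ \<alpha> @ \<beta>' @ wbar bar \<alpha> @ wbar bar (take j v)"
    and c: "take j v @ \<alpha> @ \<beta>' @ wbar bar \<alpha> \<in> L1 \<or> \<alpha> @ \<beta>' @ wbar bar \<alpha> @ wbar bar (take j v) \<in> L2"
    using vf by (auto simp: valid_fact_def)
  have v: "v = take j v @ drop j v" by simp
  have pi2: "\<pi> = (v @ \<beta> @ wbar bar (drop j v)) @ wbar bar (take j v)"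
    using pi by (subst (asm) (2) v) (simp only: wbar_append append_assoc)
  have pi3: "\<pi> = take j v @ (drop j v @ \<beta> @ wbar bar v)"
    using pi by (subst (asm) (1) v) simp
  have 1: "take j v @ \<alpha> @ \<beta>' @ wbar bar \<alpha> = v @ \<beta> @ wbar bar (drop j v)"
    using e pi2 by (metis append.assoc append_same_eq)
  have 2: "\<alpha> @ \<beta>' @ wbar bar \<alpha> @ wbar bar (take j v) = drop j v @ \<beta> @ wbar bar v"
    using e pi3 by simp
  show "v @ \<beta> @ wbar bar (drop j v) \<in> L1 \<or> drop j v @ \<beta> @ wbar bar v \<in> L2"
    using c 1 2 by simp
next
  assume c: "v @ \<beta> @ wbar bar (drop j v) \<in> L1 \<or> drop j v @ \<beta> @ wbar bar v \<in> L2"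
  define \<alpha> where "\<alpha> = take \<kappa> (drop j v)"
  define r where "r = drop (j + \<kappa>) v"
  have d: "drop j v = \<alpha> @ r" proof -
    have "drop (j + \<kappa>) v = drop \<kappa> (drop j v)" by (simp add: add.commute)
    then show ?thesis unfolding \<alpha>_def r_def by (simp only: append_take_drop_id)
  qed
  have v: "v = take j v @ \<alpha> @ r" using d by (metis append_take_drop_id)
  have la: "length \<alpha> = \<kappa>" unfolding \<alpha>_def using j by simp
  have "valid_fact bar \<kappa> L1 L2 \<pi> (take j v) \<alpha> (r @ \<beta> @ wbar bar r)"
    unfolding valid_fact_def
  proof (intro conjI)
    show "\<pi> = take j v @ \<alpha> @ (r @ \<beta> @ wbar bar r) @ wbar bar \<alpha> @ wbar bar (take j v)"
      using pi by (subst (asm) (1 2) v) simp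
    show "length \<alpha> = \<kappa>" by fact
    have A: "v @ \<beta> @ wbar bar (drop j v) = (take j v @ \<alpha> @ r) @ \<beta> @ wbar bar (\<alpha> @ r)"
      using v d by metis
    have B: "drop j v @ \<beta> @ wbar bar v = (\<alpha> @ r) @ \<beta> @ wbar bar (take j v @ \<alpha> @ r)"
      using v d by metis
    have "take j v @ \<alpha> @ (r @ \<beta> @ wbar bar r) @ wbar bar \<alpha> = v @ \<beta> @ wbar bar (drop j v)"
      unfolding A by simp
    moreover have "\<alpha> @ (r @ \<beta> @ wbar bar r) @ wbar bar \<alpha> @ wbar bar (take j v) = drop j v @ \<beta> @ wbar bar v"
      unfolding B by simp
    ultimately show "take j v @ \<alpha> @ (r @ \<beta> @ wbar bar r) @ wbar bar \<alpha> \<in> L1 \<or>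
      \<alpha> @ (r @ \<beta> @ wbar bar r) @ wbar bar \<alpha> @ wbar bar (take j v) \<in> L2" using c by simp
  qed
  then show "\<exists>\<alpha> \<beta>'. valid_fact bar \<kappa> L1 L2 \<pi> (take j v) \<alpha> \<beta>'" by blast
qed

lemma vf_take: "valid_fact bar \<kappa> L1 L2 \<pi> \<gamma> \<alpha> \<beta> \<Longrightarrow> \<gamma> @ \<alpha> = take (length \<gamma> + \<kappa>) \<pi>"
  by (auto simp: valid_fact_def)

lemma vf_prefix:
  assumes "valid_fact bar \<kappa> L1 L2 \<pi> \<gamma> \<alpha> \<beta>'" "\<pi> = v @ \<beta> @ wbar bar v" "length \<gamma> \<le> length v"
  shows "\<gamma> = take (length \<gamma>) v"
proof -
  have "take (length \<gamma>) \<pi> = \<gamma>" using assms(1) by (auto simp: valid_fact_def)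
  moreover have "take (length \<gamma>) \<pi> = take (length \<gamma>) v" using assms(2,3) by simp
  ultimately show ?thesis by simp
qed

lemma min_gap_eq:
  assumes pi: "\<pi> = v @ \<beta> @ wbar bar v" and k: "\<kappa> \<le> length v"
    and ex: "\<exists>\<alpha> \<beta>'. valid_fact bar \<kappa> L1 L2 \<pi> (take (length v - \<kappa>) v) \<alpha> \<beta>'"
    and nex: "\<forall>j < length v - \<kappa>. \<not> (\<exists>\<alpha> \<beta>'. valid_fact bar \<kappa> L1 L2 \<pi> (take j v) \<alpha> \<beta>')"
  shows "min_gap bar \<kappa> L1 L2 \<pi> = v"
proof -
  have lv: "length \<pi> \<ge> length v" using pi by simp
  have mn: "length v - \<kappa> \<le> length \<gamma>'" if "valid_fact bar \<kappa> L1 L2 \<pi> \<gamma>' \<alpha>' \<beta>''" for \<gamma>' \<alpha>' \<beta>''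
  proof (rule ccontr)
    assume "\<not> ?thesis"
    then have "length \<gamma>' < length v - \<kappa>" by simp
    moreover have "\<gamma>' = take (length \<gamma>') v" using vf_prefix[OF that pi] \<open>\<not> _\<close> by simp
    ultimately show False using nex that by metis
  qed
  from ex obtain \<alpha>0 \<beta>0 where v0: "valid_fact bar \<kappa> L1 L2 \<pi> (take (length v - \<kappa>) v) \<alpha>0 \<beta>0" by blast
  have "take (length v - \<kappa>) v @ \<alpha>0 = v"
    using vf_take[OF v0] k pi by simp
  show ?thesis unfolding min_gap_def
  proof (rule someI2)
    show "\<exists>\<gamma> \<alpha> \<beta>. valid_fact bar \<kappa> L1 L2 \<pi> \<gamma> \<alpha> \<beta> \<and> v = \<gamma> @ \<alpha> \<and>
      (\<forall>\<gamma>' \<alpha>' \<beta>'. valid_fact bar \<kappa> L1 L2 \<pi> \<gamma>' \<alpha>' \<beta>' \<longrightarrow> length \<gamma> \<le> length \<gamma>')"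
      using v0 \<open>_ = v\<close> mn k by (intro exI[of _ "take (length v - \<kappa>) v"] exI[of _ \<alpha>0] exI[of _ \<beta>0]) auto
  next
    fix u assume "\<exists>\<gamma> \<alpha> \<beta>. valid_fact bar \<kappa> L1 L2 \<pi> \<gamma> \<alpha> \<beta> \<and> u = \<gamma> @ \<alpha> \<and>
      (\<forall>\<gamma>' \<alpha>' \<beta>'. valid_fact bar \<kappa> L1 L2 \<pi> \<gamma>' \<alpha>' \<beta>' \<longrightarrow> length \<gamma> \<le> length \<gamma>')"
    then obtain \<gamma> \<alpha> \<beta>1 where g: "valid_fact bar \<kappa> L1 L2 \<pi> \<gamma> \<alpha> \<beta>1" "u = \<gamma> @ \<alpha>"
      and m: "\<forall>\<gamma>' \<alpha>' \<beta>'. valid_fact bar \<kappa> L1 L2 \<pi> \<gamma>' \<alpha>' \<beta>' \<longrightarrow> length \<gamma> \<le> length \<gamma>'" by blast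
    have "length \<gamma> \<le> length v - \<kappa>" using m v0 by fastforce
    moreover have "length v - \<kappa> \<le> length \<gamma>" using mn g(1) by blast
    ultimately have "length \<gamma> + \<kappa> = length v" using k by simp
    then show "u = v" using vf_take[OF g(1)] g(2) pi by simp
  qed
qed

theorem lemma1:
  fixes bar :: "'a::finite \<Rightarrow> 'a" and \<kappa> :: nat and L1 L2 :: "'a list set"
    and A1 :: "('q1::finite, 'a) dfa" and A2 :: "('q2::finite, 'a) dfa"
  assumes "card (UNIV :: 'a set) \<ge> 2"
    and "\<And>a. bar (bar a) = a"
    and "\<kappa> > 0"
    and "lang A1 = L1"
    and "lang A2 = wbar bar ` L2"
  defines "M \<equiv> init_states bar \<kappa> A1 A2 \<times> final_states bar \<kappa> A1 A2"
  shows "Hk bar \<kappa> L1 L2 = (\<Union>\<mu>\<in>M. Bpow bar (Bmu bar A1 A2 \<mu>) (Rmu bar \<kappa> A1 A2 \<mu>)) \<and>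
      disjoint_family_on (\<lambda>\<mu>. Bpow bar (Bmu bar A1 A2 \<mu>) (Rmu bar \<kappa> A1 A2 \<mu>)) M \<and>
      (\<forall>\<mu>\<in>M. \<forall>\<beta>\<in>Bmu bar A1 A2 \<mu>. \<forall>v\<in>Rmu bar \<kappa> A1 A2 \<mu>.
           min_gap bar \<kappa> L1 L2 (v @ \<beta> @ wbar bar v) = v)"
proof -
  note inv = assms(2)
  note ww = wbar_wbar[OF inv]
  have k: "0 < \<kappa>" by fact
  have L1: "\<And>w. w \<in> L1 \<longleftrightarrow> run (fst A1) (fst (snd A1)) w \<in> snd (snd A1)"
    using assms(4) lang_eq[of A1] by auto
  have L2: "\<And>w. w \<in> L2 \<longleftrightarrow> run (fst A2) (fst (snd A2)) (wbar bar w) \<in> snd (snd A2)"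
  proof -
    fix w
    have "wbar bar w \<in> wbar bar ` L2 \<longleftrightarrow> w \<in> L2"
      by (auto simp: ww) (metis ww)
    then show "w \<in> L2 \<longleftrightarrow> run (fst A2) (fst (snd A2)) (wbar bar w) \<in> snd (snd A2)"
      using assms(5) lang_eq[of A2] by auto
  qed
  define E1 where "E1 v \<beta> = run (fst A1) (run (fst A1) (fst (snd A1)) v) \<beta>" for v \<beta>
  define E2 where "E2 v \<beta> = run (fst A2) (run (fst A2) (fst (snd A2)) v) (wbar bar \<beta>)" for v \<beta>
  define mkF where "mkF v \<beta> = ((run (fst A1) (fst (snd A1)) v, run (fst A2) (fst (snd A2)) v),
     E1 v \<beta>, E2 v \<beta>, \<kappa>)" for v \<beta>
  define mkI where "mkI v \<beta> = ((fst (snd A1), fst (snd A2)),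
     run (fst A1) (E1 v \<beta>) (wbar bar v), run (fst A2) (E2 v \<beta>) (wbar bar v), 0::nat)" for v \<beta>
  have cond_iff: "\<And>v \<beta> j. cnd bar A1 A2 (E1 v \<beta>) (E2 v \<beta>) v j \<longleftrightarrow>
      (v @ \<beta> @ wbar bar (drop j v) \<in> L1 \<or> drop j v @ \<beta> @ wbar bar v \<in> L2)"
    by (simp add: cnd_def L1 L2 ww E1_def E2_def)
  have K: "\<kappa> \<le> length v \<and> (\<forall>j \<le> length v - \<kappa>. cnd bar A1 A2 (E1 v \<beta>) (E2 v \<beta>) v j \<longleftrightarrow> j = length v - \<kappa>)
      \<and> \<mu> = (mkI v \<beta>, mkF v \<beta>)"
    if mu: "\<mu> \<in> M" and b: "\<beta> \<in> Bmu bar A1 A2 \<mu>" and v: "v \<in> Rmu bar \<kappa> A1 A2 \<mu>" for \<mu> \<beta> v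
  proof -
    obtain I F where mu': "\<mu> = (I, F)" by (cases \<mu>)
    from mu mu' obtain q1 q2 where I: "I = ((fst (snd A1), fst (snd A2)), q1, q2, 0)"
      unfolding M_def init_states_def by auto
    obtain d1 d2 e1 e2 lt where F: "F = ((d1, d2), e1, e2, lt)" by (cases F) auto
    have lt: "lt = \<kappa>" using mu mu' F unfolding M_def final_states_def by auto
    have ap: "apath bar \<kappa> A1 A2 I v F" using v mu' by (simp add: Rmu_def)
    have bb: "\<beta> \<in> Bset bar A1 A2 d1 d2 e1 e2" using b mu' F by (simp add: Bmu_def)
    note cm = apath_comps[OF ap I F]
    have e1: "e1 = E1 v \<beta>" and e2: "e2 = E2 v \<beta>" using bb cm by (auto simp: Bset_def E1_def E2_def)
    note Z = apath_zero[OF ap I F[unfolded lt] k]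
    show ?thesis using Z cm e1 e2 mu' I F lt by (simp add: mkI_def mkF_def)
  qed
  have K2: "v @ \<beta> @ wbar bar v \<in> Hk bar \<kappa> L1 L2 \<and> min_gap bar \<kappa> L1 L2 (v @ \<beta> @ wbar bar v) = v"
    if mu: "\<mu> \<in> M" and b: "\<beta> \<in> Bmu bar A1 A2 \<mu>" and v: "v \<in> Rmu bar \<kappa> A1 A2 \<mu>" for \<mu> \<beta> v
  proof -
    note KK = K[OF mu b v]
    have eq: "(\<exists>\<alpha> \<beta>'. valid_fact bar \<kappa> L1 L2 (v @ \<beta> @ wbar bar v) (take j v) \<alpha> \<beta>') \<longleftrightarrow> j = length v - \<kappa>"
      if "j \<le> length v - \<kappa>" for j
    proof -
      have jk: "j + \<kappa> \<le> length v" using that KK[THEN conjunct1] by linarith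
      have "(\<exists>\<alpha> \<beta>'. valid_fact bar \<kappa> L1 L2 (v @ \<beta> @ wbar bar v) (take j v) \<alpha> \<beta>') \<longleftrightarrow>
         (v @ \<beta> @ wbar bar (drop j v) \<in> L1 \<or> drop j v @ \<beta> @ wbar bar v \<in> L2)"
        by (rule vf_iff[OF refl jk])
      then show ?thesis using that KK cond_iff by auto
    qed
    have ex: "\<exists>\<alpha> \<beta>'. valid_fact bar \<kappa> L1 L2 (v @ \<beta> @ wbar bar v) (take (length v - \<kappa>) v) \<alpha> \<beta>'"
      using eq by auto
    have nex: "\<forall>j < length v - \<kappa>. \<not> (\<exists>\<alpha> \<beta>'. valid_fact bar \<kappa> L1 L2 (v @ \<beta> @ wbar bar v) (take j v) \<alpha> \<beta>')"
      using eq by auto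
    have "v @ \<beta> @ wbar bar v \<in> Hk bar \<kappa> L1 L2"
      using ex unfolding Hk_def valid_fact_def by fastforce
    then show ?thesis using min_gap_eq[OF refl _ ex nex] KK by simp
  qed
  have P3: "\<forall>\<mu>\<in>M. \<forall>\<beta>\<in>Bmu bar A1 A2 \<mu>. \<forall>v\<in>Rmu bar \<kappa> A1 A2 \<mu>.
           min_gap bar \<kappa> L1 L2 (v @ \<beta> @ wbar bar v) = v" using K2 by blast
  have P2: "disjoint_family_on (\<lambda>\<mu>. Bpow bar (Bmu bar A1 A2 \<mu>) (Rmu bar \<kappa> A1 A2 \<mu>)) M"
    unfolding disjoint_family_on_def
  proof (intro ballI impI)
    fix \<mu> \<mu>' assume m: "\<mu> \<in> M" "\<mu>' \<in> M" "\<mu> \<noteq> \<mu>'"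
    show "Bpow bar (Bmu bar A1 A2 \<mu>) (Rmu bar \<kappa> A1 A2 \<mu>) \<inter> Bpow bar (Bmu bar A1 A2 \<mu>') (Rmu bar \<kappa> A1 A2 \<mu>') = {}"
    proof (rule ccontr)
      assume "\<not> ?thesis"
      then obtain \<beta> v \<beta>' v' where b: "\<beta> \<in> Bmu bar A1 A2 \<mu>" "v \<in> Rmu bar \<kappa> A1 A2 \<mu>"
        and b': "\<beta>' \<in> Bmu bar A1 A2 \<mu>'" "v' \<in> Rmu bar \<kappa> A1 A2 \<mu>'"
        and x: "v @ \<beta> @ wbar bar v = v' @ \<beta>' @ wbar bar v'"
        unfolding Bpow_def by blast
      have "v = v'" using K2[OF m(1) b] K2[OF m(2) b'] x by metis
      with x have "\<beta> = \<beta>'" by simp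
      then show False using K[OF m(1) b] K[OF m(2) b'] \<open>v = v'\<close> m(3) by simp
    qed
  qed
  have P1: "Hk bar \<kappa> L1 L2 = (\<Union>\<mu>\<in>M. Bpow bar (Bmu bar A1 A2 \<mu>) (Rmu bar \<kappa> A1 A2 \<mu>))"
  proof
    show "(\<Union>\<mu>\<in>M. Bpow bar (Bmu bar A1 A2 \<mu>) (Rmu bar \<kappa> A1 A2 \<mu>)) \<subseteq> Hk bar \<kappa> L1 L2"
      unfolding Bpow_def using K2 by blast
  next
    show "Hk bar \<kappa> L1 L2 \<subseteq> (\<Union>\<mu>\<in>M. Bpow bar (Bmu bar A1 A2 \<mu>) (Rmu bar \<kappa> A1 A2 \<mu>))"
    proof
      fix \<pi> assume "\<pi> \<in> Hk bar \<kappa> L1 L2"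
      then obtain \<gamma> \<alpha> \<beta> where pi: "\<pi> = \<gamma> @ \<alpha> @ \<beta> @ wbar bar \<alpha> @ wbar bar \<gamma>" and la: "length \<alpha> \<ge> \<kappa>"
        and c: "\<gamma> @ \<alpha> @ \<beta> @ wbar bar \<alpha> \<in> L1 \<or> \<alpha> @ \<beta> @ wbar bar \<alpha> @ wbar bar \<gamma> \<in> L2"
        unfolding Hk_def by blast
      define \<alpha>1 where "\<alpha>1 = take \<kappa> \<alpha>"
      define \<alpha>2 where "\<alpha>2 = drop \<kappa> \<alpha>"
      have a: "\<alpha> = \<alpha>1 @ \<alpha>2" unfolding \<alpha>1_def \<alpha>2_def by simp
      have la1: "length \<alpha>1 = \<kappa>" using la unfolding \<alpha>1_def by simp
      have "valid_fact bar \<kappa> L1 L2 \<pi> \<gamma> \<alpha>1 (\<alpha>2 @ \<beta> @ wbar bar \<alpha>2)"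
        using pi c la1 unfolding valid_fact_def a by simp
      then have exn: "\<exists>n \<gamma> \<alpha> \<beta>. valid_fact bar \<kappa> L1 L2 \<pi> \<gamma> \<alpha> \<beta> \<and> length \<gamma> = n" by blast
      define n where "n = (LEAST n. \<exists>\<gamma> \<alpha> \<beta>. valid_fact bar \<kappa> L1 L2 \<pi> \<gamma> \<alpha> \<beta> \<and> length \<gamma> = n)"
      from LeastI_ex[OF exn] obtain \<gamma>0 \<alpha>0 \<beta>0 where v0: "valid_fact bar \<kappa> L1 L2 \<pi> \<gamma>0 \<alpha>0 \<beta>0"
        and ln: "length \<gamma>0 = n" unfolding n_def by blast
      have nl: "\<And>j \<gamma> \<alpha> \<beta>. j < n \<Longrightarrow> \<not> (valid_fact bar \<kappa> L1 L2 \<pi> \<gamma> \<alpha> \<beta> \<and> length \<gamma> = j)"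
        unfolding n_def using not_less_Least by blast
      define v where "v = \<gamma>0 @ \<alpha>0"
      have pv: "\<pi> = v @ \<beta>0 @ wbar bar v" and la0: "length \<alpha>0 = \<kappa>"
        using v0 unfolding v_def valid_fact_def by auto
      have lv: "length v = n + \<kappa>" using ln la0 v_def by simp
      have tk: "take n v = \<gamma>0" using ln v_def by simp
      have eqv: "(\<exists>\<alpha> \<beta>'. valid_fact bar \<kappa> L1 L2 \<pi> (take j v) \<alpha> \<beta>') \<longleftrightarrow> j = n" if "j \<le> n" for j
      proof
        assume "\<exists>\<alpha> \<beta>'. valid_fact bar \<kappa> L1 L2 \<pi> (take j v) \<alpha> \<beta>'"
        then obtain \<alpha> \<beta>' where "valid_fact bar \<kappa> L1 L2 \<pi> (take j v) \<alpha> \<beta>'" by blast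
        moreover have "length (take j v) = j" using that lv by simp
        ultimately show "j = n" using nl[of j] that by (metis le_neq_implies_less)
      next
        assume "j = n" then show "\<exists>\<alpha> \<beta>'. valid_fact bar \<kappa> L1 L2 \<pi> (take j v) \<alpha> \<beta>'"
          using v0 tk by blast
      qed
      have cc: "\<forall>j \<le> length v - \<kappa>. cnd bar A1 A2 (E1 v \<beta>0) (E2 v \<beta>0) v j \<longleftrightarrow> j = length v - \<kappa>"
      proof (intro allI impI)
        fix j assume j: "j \<le> length v - \<kappa>"
        have jk: "j + \<kappa> \<le> length v" using j lv by simp
        have "(\<exists>\<alpha> \<beta>'. valid_fact bar \<kappa> L1 L2 \<pi> (take j v) \<alpha> \<beta>') \<longleftrightarrow>
         (v @ \<beta>0 @ wbar bar (drop j v) \<in> L1 \<or> drop j v @ \<beta>0 @ wbar bar v \<in> L2)"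
          by (rule vf_iff[OF pv jk])
        then show "cnd bar A1 A2 (E1 v \<beta>0) (E2 v \<beta>0) v j \<longleftrightarrow> j = length v - \<kappa>"
          using cond_iff eqv[of j] lv j by simp
      qed
      have bx: "\<beta>0 \<in> Bset bar A1 A2 (run (fst A1) (fst (snd A1)) v) (run (fst A2) (fst (snd A2)) v) (E1 v \<beta>0) (E2 v \<beta>0)"
        by (simp add: Bset_def E1_def E2_def)
      have ap: "apath bar \<kappa> A1 A2 (mkI v \<beta>0) v (mkF v \<beta>0)"
        unfolding mkI_def mkF_def
        using mkpath_zero[OF inv k, of v A1 A2 "E1 v \<beta>0" "E2 v \<beta>0" "fst (snd A1)" "fst (snd A2)" \<beta>0]
          lv cc bx by (simp add: Q12_init)
      have "v \<noteq> []" using lv k by auto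
      then have bI: "is_bridge bar \<kappa> A1 A2 (mkI v \<beta>0)" using apath_bridge[OF ap] by simp
      have bF: "is_bridge bar \<kappa> A1 A2 (mkF v \<beta>0)"
        unfolding is_bridge_def mkF_def using Q12_run[OF Q12_init[of A1 A2], of v] bx by auto
      have mM: "(mkI v \<beta>0, mkF v \<beta>0) \<in> M"
        unfolding M_def init_states_def final_states_def using bI bF by (auto simp: mkI_def mkF_def)
      have "\<beta>0 \<in> Bmu bar A1 A2 (mkI v \<beta>0, mkF v \<beta>0)" using bx by (simp add: Bmu_def mkF_def)
      moreover have "v \<in> Rmu bar \<kappa> A1 A2 (mkI v \<beta>0, mkF v \<beta>0)" using ap by (simp add: Rmu_def)
      ultimately have "\<pi> \<in> Bpow bar (Bmu bar A1 A2 (mkI v \<beta>0, mkF v \<beta>0)) (Rmu bar \<kappa> A1 A2 (mkI v \<beta>0, mkF v \<beta>0))"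
        unfolding Bpow_def pv by blast
      with mM show "\<pi> \<in> (\<Union>\<mu>\<in>M. Bpow bar (Bmu bar A1 A2 \<mu>) (Rmu bar \<kappa> A1 A2 \<mu>))" by blast
    qed
  qed
  show ?thesis using P1 P2 P3 by blast
qed

end
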